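(* For every integer $n\ge4$ there exist a connected graph $\mathcal G$ with $n$ nodes, two distinct non-adjacent nodes $i^*,j^*$ of $\mathcal G$, and an arrival distribution $\alpha$ satisfying the stability condition for $\mathcal G$, such that $\mathbb E[\overline Q]>\mathbb E[Q]$, where $\overline{\mathcal G}$ is $\mathcal G$ with the edge $\{i^*,j^*\}$ added.
   Context: A matching model consists of a finite connected simple graph $\mathcal G=(\mathcal V,\xi)$ and an arrival distribution $\alpha$ on $\mathcal V$ (all $\alpha_i>0$). $\mathcal E(i)$ is the neighbour set of $i$, $\mathcal E(V)=\bigcup_{i\in V}\mathcal E(i)$, $|\alpha_V|=\sum_{i\in V}\alpha_i$. Under FCFS, an arriving item of class $i$ is matched with the oldest present item whose class lies in $\mathcal E(i)$ (both leave), otherwise it waits. An independent set is a non-empty set of pairwise non-adjacent nodes. The stability condition is $|\alpha_{\mathcal I}|<|\alpha_{\mathcal E(\mathcal I)}|$ for every independent set $\mathcal I$ of $\mathcal G$; under it the FCFS chain is positive recurrent and $\mathbb E[Q]$ denotes the stationary mean number of items; $\mathbb E[\overline Q]$ is the analogous quantity for $\overline{\mathcal G}$ with the same $\alpha$. *)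

theory Defs
  imports "HOL-Analysis.Analysis"
begin

definition simple_graph :: "nat set \<Rightarrow> (nat \<Rightarrow> nat \<Rightarrow> bool) \<Rightarrow> bool" where
  "simple_graph V E \<longleftrightarrow> finite V \<and> (\<forall>x y. E x y \<longrightarrow> x \<in> V \<and> y \<in> V)
     \<and> (\<forall>x y. E x y \<longrightarrow> E y x) \<and> (\<forall>x. \<not> E x x)"

definition connected_graph :: "nat set \<Rightarrow> (nat \<Rightarrow> nat \<Rightarrow> bool) \<Rightarrow> bool" where
  "connected_graph V E \<longleftrightarrow> simple_graph V E \<and> V \<noteq> {} \<and> (\<forall>x\<in>V. \<forall>y\<in>V. E\<^sup>*\<^sup>* x y)"

definition nbrs :: "nat set \<Rightarrow> (nat \<Rightarrow> nat \<Rightarrow> bool) \<Rightarrow> nat set \<Rightarrow> nat set" where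
  "nbrs V E I = {j \<in> V. \<exists>i\<in>I. E i j}"

definition independent_set :: "nat set \<Rightarrow> (nat \<Rightarrow> nat \<Rightarrow> bool) \<Rightarrow> nat set \<Rightarrow> bool" where
  "independent_set V E I \<longleftrightarrow> I \<noteq> {} \<and> I \<subseteq> V \<and> (\<forall>i\<in>I. \<forall>j\<in>I. \<not> E i j)"

definition arrival_dist :: "nat set \<Rightarrow> (nat \<Rightarrow> real) \<Rightarrow> bool" where
  "arrival_dist V \<alpha> \<longleftrightarrow> (\<forall>i\<in>V. \<alpha> i > 0) \<and> sum \<alpha> V = 1"

definition stable :: "nat set \<Rightarrow> (nat \<Rightarrow> nat \<Rightarrow> bool) \<Rightarrow> (nat \<Rightarrow> real) \<Rightarrow> bool" where
  "stable V E \<alpha> \<longleftrightarrow> (\<forall>I. independent_set V E I \<longrightarrow> sum \<alpha> I < sum \<alpha> (nbrs V E I))"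

text \<open>A state is the list of classes of the items present, oldest first.
  An arriving item of class i is matched with the oldest present item whose class is
  a neighbour of i (both leave); otherwise it is appended at the end.\<close>
definition fcfs_step :: "(nat \<Rightarrow> nat \<Rightarrow> bool) \<Rightarrow> nat list \<Rightarrow> nat \<Rightarrow> nat list" where
  "fcfs_step E w i =
     (if \<exists>k<length w. E i (w ! k)
      then (let k = (LEAST k. k < length w \<and> E i (w ! k)) in take k w @ drop (Suc k) w)
      else w @ [i])"

inductive_set fcfs_reach :: "nat set \<Rightarrow> (nat \<Rightarrow> nat \<Rightarrow> bool) \<Rightarrow> nat list set"
  for V E where
  empty: "[] \<in> fcfs_reach V E"
| step: "w \<in> fcfs_reach V E \<Longrightarrow> i \<in> V \<Longrightarrow> fcfs_step E w i \<in> fcfs_reach V E"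

definition fcfs_trans :: "nat set \<Rightarrow> (nat \<Rightarrow> nat \<Rightarrow> bool) \<Rightarrow> (nat \<Rightarrow> real) \<Rightarrow> nat list \<Rightarrow> nat list \<Rightarrow> real" where
  "fcfs_trans V E \<alpha> w w' = (\<Sum>i\<in>V. if fcfs_step E w i = w' then \<alpha> i else 0)"

definition fcfs_stationary :: "nat set \<Rightarrow> (nat \<Rightarrow> nat \<Rightarrow> bool) \<Rightarrow> (nat \<Rightarrow> real) \<Rightarrow> (nat list \<Rightarrow> real) \<Rightarrow> bool" where
  "fcfs_stationary V E \<alpha> \<pi> \<longleftrightarrow>
     (\<forall>w. \<pi> w \<ge> 0) \<and> (\<forall>w. w \<notin> fcfs_reach V E \<longrightarrow> \<pi> w = 0) \<and> (\<pi> has_sum 1) UNIV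
     \<and> (\<forall>w'. ((\<lambda>w. \<pi> w * fcfs_trans V E \<alpha> w w') has_sum \<pi> w') UNIV)"

definition mean_items :: "(nat list \<Rightarrow> real) \<Rightarrow> ennreal" where
  "mean_items \<pi> = (\<Sum>\<^sub>\<infinity>w. ennreal (\<pi> w * real (length w)))"

definition add_edge :: "(nat \<Rightarrow> nat \<Rightarrow> bool) \<Rightarrow> nat \<Rightarrow> nat \<Rightarrow> nat \<Rightarrow> nat \<Rightarrow> bool" where
  "add_edge E a b = (\<lambda>x y. E x y \<or> (x = a \<and> y = b) \<or> (x = b \<and> y = a))"

end

theory Submission
  imports Defs
begin


lemma words_Suc:
  "{w. set w \<subseteq> S \<and> length w = Suc k} = (\<lambda>(x,w). x # w) ` (S \<times> {w. set w \<subseteq> S \<and> length w = k})"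
  by (auto simp: length_Suc_conv image_iff)

lemma sum_words:
  fixes r :: "'a \<Rightarrow> real"
  assumes "finite S"
  shows "(\<Sum>w\<in>{w. set w \<subseteq> S \<and> length w = k}. prod_list (map r w)) = (sum r S) ^ k"
proof (induction k)
  case 0
  have "{w. set w \<subseteq> S \<and> length w = 0} = {[]}" by auto
  then show ?case by simp
next
  case (Suc k)
  have inj: "inj_on (\<lambda>(x,w). x # w) (S \<times> {w. set w \<subseteq> S \<and> length w = k})"
    by (auto simp: inj_on_def)
  have fin: "finite {w. set w \<subseteq> S \<and> length w = k}"
    using finite_lists_length_eq[OF assms] by simp
  have "(\<Sum>w\<in>{w. set w \<subseteq> S \<and> length w = Suc k}. prod_list (map r w))
      = (\<Sum>p\<in>S \<times> {w. set w \<subseteq> S \<and> length w = k}. prod_list (map r ((\<lambda>(x,w). x # w) p)))"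
    unfolding words_Suc by (rule sum.reindex[OF inj, unfolded comp_def])
  also have "\<dots> = (\<Sum>x\<in>S. \<Sum>w\<in>{w. set w \<subseteq> S \<and> length w = k}. r x * prod_list (map r w))"
    by (subst sum.cartesian_product) (simp add: case_prod_beta)
  also have "\<dots> = sum r S * (\<Sum>w\<in>{w. set w \<subseteq> S \<and> length w = k}. prod_list (map r w))"
    by (rule sum_product[symmetric])
  finally show ?case using Suc by simp
qed

lemma has_sum_lists:
  fixes r :: "nat \<Rightarrow> real"
  assumes fin: "finite S" and nn: "\<And>x. x \<in> S \<Longrightarrow> r x \<ge> 0" and lt: "sum r S < 1"
  and g_nn: "\<And>k. g k \<ge> 0" and gs: "((\<lambda>k. g k * sum r S ^ k) has_sum T) UNIV"
  shows "((\<lambda>w. if set w \<subseteq> S then prod_list (map r w) * g (length w) else 0) has_sum T) UNIV"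
proof -
  define W where "W k = {w. set w \<subseteq> S \<and> length w = k}" for k
  define f where "f = (\<lambda>w. if set w \<subseteq> S then prod_list (map r w) * g (length w) else 0)"
  have finW: "finite (W k)" for k
    unfolding W_def using finite_lists_length_eq[OF fin] by simp
  have pnn: "set w \<subseteq> S \<Longrightarrow> prod_list (map r w) \<ge> 0" for w
    by (induction w) (auto intro!: mult_nonneg_nonneg nn)
  have inner: "((\<lambda>w. f (snd (k, w))) has_sum (g k * sum r S ^ k)) (W k)" for k
  proof -
    have "((\<lambda>w. f (snd (k, w))) has_sum sum (\<lambda>w. f (snd (k, w))) (W k)) (W k)"
      using finW by simp
    moreover have "sum (\<lambda>w. f (snd (k, w))) (W k) = g k * sum r S ^ k"
    proof -
      have "sum (\<lambda>w. f (snd (k, w))) (W k) = (\<Sum>w\<in>W k. prod_list (map r w) * g k)"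
        by (rule sum.cong) (auto simp: f_def W_def)
      also have "\<dots> = (\<Sum>w\<in>W k. prod_list (map r w)) * g k"
        by (rule sum_distrib_right[symmetric])
      also have "\<dots> = g k * sum r S ^ k"
        using sum_words[OF fin, where k=k and r=r] by (simp add: W_def)
      finally show ?thesis .
    qed
    ultimately show ?thesis by simp
  qed
  have summ: "(\<lambda>p. f (snd p)) summable_on Sigma UNIV W"
    apply (rule summable_on_SigmaI[where g = "\<lambda>k. g k * sum r S ^ k"])
    using inner apply simp
    using gs apply (simp add: has_sum_imp_summable)
    by (auto simp: f_def W_def intro!: mult_nonneg_nonneg pnn g_nn)
  have "((\<lambda>p. f (snd p)) has_sum T) (Sigma UNIV W)"
    by (rule has_sum_SigmaI[OF _ gs summ]) (use inner in simp)
  moreover have "inj_on snd (Sigma UNIV W)" by (auto simp: inj_on_def W_def)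
  ultimately have "(f has_sum T) (snd ` Sigma UNIV W)"
    by (simp add: has_sum_reindex comp_def)
  moreover have "snd ` Sigma UNIV W = {w. set w \<subseteq> S}"
    by (auto simp: W_def image_iff)
  ultimately have "(f has_sum T) {w. set w \<subseteq> S}" by simp
  then have "(f has_sum T) UNIV"
    by (rule has_sum_cong_neutral[THEN iffD1, rotated -1]) (auto simp: f_def)
  then show ?thesis by (simp add: f_def)
qed

lemma has_sum_geom:
  fixes q :: real assumes "0 \<le> q" "q < 1"
  shows "((\<lambda>k. 1 * q ^ k) has_sum 1 / (1 - q)) UNIV"
  using sums_nonneg_imp_has_sum[OF geometric_sums[of q]] assms by simp

lemma has_sum_geom_len:
  fixes q :: real assumes "0 \<le> q" "q < 1"
  shows "((\<lambda>k. real k * q ^ k) has_sum q / (1 - q)^2) UNIV"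
proof -
  have "(\<lambda>n. of_nat (Suc n) * q ^ n) sums (1 / (1 - q)^2)"
    using geometric_deriv_sums[of q] assms by simp
  then have "(\<lambda>n. q * (of_nat (Suc n) * q ^ n)) sums (q * (1 / (1 - q)^2))"
    by (rule sums_mult)
  then have "(\<lambda>n. real (Suc n) * q ^ (Suc n)) sums (q / (1 - q)^2 + real 0 * q ^ 0)"
    by (simp add: algebra_simps)
  then have "(\<lambda>n. real n * q ^ n) sums (q / (1 - q)^2)"
    by (subst (asm) sums_Suc_iff) simp
  then show ?thesis
    by (rule sums_nonneg_imp_has_sum) (use assms in simp)
qed



lemma has_sum_ennreal:
  fixes f :: "'a \<Rightarrow> real"
  assumes "(f has_sum s) A" "\<And>x. f x \<ge> 0"
  shows "(\<Sum>\<^sub>\<infinity>x\<in>A. ennreal (f x)) = ennreal s"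
proof -
  have "((ennreal \<circ> f) has_sum (ennreal s)) A"
  proof (rule has_sum_comm_additive_general[OF _ _ assms(1)])
    show "sum (ennreal \<circ> f) F = ennreal (sum f F)" for F
      using assms(2) by (simp add: sum_ennreal)
    show "ennreal \<midarrow>s\<rightarrow> ennreal s"
      by (intro tendsto_ennrealI tendsto_ident_at)
  qed
  then show ?thesis by (simp add: infsumI comp_def)
qed

lemma has_sum_sum_fin:
  fixes f :: "'i \<Rightarrow> 'a \<Rightarrow> real"
  assumes "finite I" "\<And>i. i \<in> I \<Longrightarrow> (f i has_sum s i) A"
  shows "((\<lambda>x. \<Sum>i\<in>I. f i x) has_sum (\<Sum>i\<in>I. s i)) A"
  using assms
proof (induction I rule: finite_induct)
  case empty
  then show ?case by simp
next
  case (insert j I)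
  then have "((\<lambda>x. f j x + (\<Sum>i\<in>I. f i x)) has_sum (s j + (\<Sum>i\<in>I. s i))) A"
    by (intro has_sum_add) auto
  then show ?case using insert by simp
qed



locale cmp =
  fixes V :: "nat set" and pt :: "nat \<Rightarrow> nat" and \<alpha> :: "nat \<Rightarrow> real"
  assumes finV: "finite V" and apos: "\<And>i. i \<in> V \<Longrightarrow> \<alpha> i > 0" and atot: "sum \<alpha> V = 1"
    and half: "\<And>i. i \<in> V \<Longrightarrow> sum \<alpha> {j\<in>V. pt j = pt i} < 1/2"
begin

definition E where "E x y \<longleftrightarrow> x \<in> V \<and> y \<in> V \<and> pt x \<noteq> pt y"
definition Vl where "Vl l = {i\<in>V. pt i = l}"
definition m where "m l = sum \<alpha> (Vl l)"
definition r where "r i = \<alpha> i / (1 - m (pt i))"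
definition valid where "valid w \<longleftrightarrow> set w \<subseteq> V \<and> (\<forall>x\<in>set w. pt x = pt (hd w))"

lemma valid_Nil[simp]: "valid []" by (simp add: valid_def)
lemma valid_Cons[simp]: "valid (a # w) \<longleftrightarrow> a \<in> V \<and> set w \<subseteq> V \<and> (\<forall>x\<in>set w. pt x = pt a)"
  by (simp add: valid_def)
lemma valid_mem: "valid w \<Longrightarrow> x \<in> set w \<Longrightarrow> x \<in> V \<and> pt x = pt (hd w)"
  by (auto simp: valid_def)
lemma valid_subV: "valid w \<Longrightarrow> set w \<subseteq> V"
  by (simp add: valid_def)

lemma m_ge0: "m l \<ge> 0"
  unfolding m_def Vl_def using apos by (intro sum_nonneg) (auto intro: less_imp_le)

lemma m_lt: "m l < 1/2"
proof (cases "\<exists>i\<in>V. pt i = l")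
  case True
  then obtain i where "i \<in> V" "pt i = l" by auto
  then show ?thesis using half[of i] by (simp add: m_def Vl_def)
next
  case False
  then have "Vl l = {}" by (auto simp: Vl_def)
  then show ?thesis by (simp add: m_def)
qed

lemma sum_other: "sum \<alpha> {i\<in>V. pt i \<noteq> l} = 1 - m l"
proof -
  have "V = {i\<in>V. pt i = l} \<union> {i\<in>V. pt i \<noteq> l}" by auto
  then have "sum \<alpha> V = sum \<alpha> ({i\<in>V. pt i = l} \<union> {i\<in>V. pt i \<noteq> l})" by simp
  also have "\<dots> = sum \<alpha> {i\<in>V. pt i = l} + sum \<alpha> {i\<in>V. pt i \<noteq> l}"
    by (rule sum.union_disjoint) (use finV in auto)
  finally have "sum \<alpha> V = sum \<alpha> {i\<in>V. pt i = l} + sum \<alpha> {i\<in>V. pt i \<noteq> l}" .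
  then show ?thesis using atot by (simp add: m_def Vl_def)
qed

lemma step_valid:
  assumes "valid w" "i \<in> V"
  shows "fcfs_step E w i = (if w \<noteq> [] \<and> pt i \<noteq> pt (hd w) then tl w else w @ [i])"
proof (cases "w \<noteq> [] \<and> pt i \<noteq> pt (hd w)")
  case True
  then have hdV: "hd w \<in> V" using valid_mem[OF assms(1) hd_in_set[of w]] by simp
  have "w ! 0 = hd w" using True by (simp add: hd_conv_nth)
  then have e0: "E i (w ! 0)" using True hdV assms(2) by (simp add: E_def)
  then have ex: "\<exists>k<length w. E i (w ! k)" using True by auto
  have "(LEAST k. k < length w \<and> E i (w ! k)) = 0"
    using e0 True by (intro Least_eq_0) simp
  then show ?thesis using True ex by (simp add: fcfs_step_def drop_Suc)
next
  case False
  have "\<not> E i (w ! k)" if "k < length w" for k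
  proof -
    have "w ! k \<in> set w" using that by simp
    moreover have "hd w \<in> set w" using that by (cases w) auto
    ultimately have "pt (w ! k) = pt (hd w)" using valid_mem[OF assms(1) \<open>w ! k \<in> set w\<close>] by simp
    then show ?thesis using False that by (auto simp: E_def)
  qed
  then show ?thesis using False by (auto simp: fcfs_step_def)
qed

lemma valid_snoc: "valid (w @ [i]) \<longleftrightarrow> valid w \<and> i \<in> V \<and> (w \<noteq> [] \<longrightarrow> pt i = pt (hd w))"
  by (cases w) auto

lemma valid_tl: "valid w \<Longrightarrow> valid (tl w)"
proof (cases w)
  case (Cons a w')
  assume v: "valid w"
  show ?thesis
  proof (cases w')
    case Nil
    then show ?thesis using \<open>w = a # w'\<close> by simp
  next
    case (Cons b w'')
    then show ?thesis using v \<open>w = a # w'\<close> by auto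
  qed
qed simp

lemma valid_step: "valid w \<Longrightarrow> i \<in> V \<Longrightarrow> valid (fcfs_step E w i)"
  by (auto simp: step_valid valid_tl valid_snoc)

lemma valid_reach: "valid w \<Longrightarrow> w \<in> fcfs_reach V E"
proof (induction w rule: rev_induct)
  case Nil
  show ?case by (rule fcfs_reach.empty)
next
  case (snoc x w)
  then have v: "valid w" "x \<in> V" "w \<noteq> [] \<longrightarrow> pt x = pt (hd w)" by (auto simp: valid_snoc)
  then have "fcfs_step E w x = w @ [x]" by (auto simp: step_valid)
  then show ?case using fcfs_reach.step[OF snoc.IH[OF v(1)] v(2)] by simp
qed

end


context cmp begin

definition L where "L = pt ` V"
definition \<rho> where "\<rho> l = m l / (1 - m l)"
definition Z where "Z = 1 + (\<Sum>l\<in>L. \<rho> l / (1 - \<rho> l))"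
definition \<pi> where "\<pi> w = (if valid w then prod_list (map r w) / Z else 0)"

lemma rho_ge0: "\<rho> l \<ge> 0" using m_ge0 m_lt[of l] by (simp add: \<rho>_def)
lemma rho_lt1: "\<rho> l < 1" using m_ge0[of l] m_lt[of l] by (simp add: \<rho>_def field_simps)
lemma rq_ge0: "\<rho> l / (1 - \<rho> l) \<ge> 0"
  using rho_ge0[of l] rho_lt1[of l] by simp
lemma Z_ge1: "Z \<ge> 1"
  unfolding Z_def using rq_ge0 by (simp add: sum_nonneg)
lemma r_mul: "r j * (1 - m (pt j)) = \<alpha> j"
  using m_lt[of "pt j"] by (simp add: r_def)
lemma r_ge0: "j \<in> V \<Longrightarrow> r j \<ge> 0"
  using apos[of j] m_lt[of "pt j"] by (simp add: r_def)

lemma trans0: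
  assumes "valid w" "\<And>i. i \<in> V \<Longrightarrow> fcfs_step E w i \<noteq> w'"
  shows "fcfs_trans V E \<alpha> w w' = 0"
  unfolding fcfs_trans_def using assms(2) by (intro sum.neutral) auto

lemma trans_tl:
  assumes "valid w" "w \<noteq> []"
  shows "fcfs_trans V E \<alpha> w (tl w) = 1 - m (pt (hd w))"
proof -
  have "fcfs_trans V E \<alpha> w (tl w) = (\<Sum>i\<in>V. if pt i \<noteq> pt (hd w) then \<alpha> i else 0)"
    unfolding fcfs_trans_def
  proof (rule sum.cong[OF refl])
    fix i assume "i \<in> V"
    then show "(if fcfs_step E w i = tl w then \<alpha> i else 0) = (if pt i \<noteq> pt (hd w) then \<alpha> i else 0)"
      using assms by (auto simp: step_valid dest: arg_cong[of _ _ length])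
  qed
  also have "\<dots> = sum \<alpha> {i\<in>V. pt i \<noteq> pt (hd w)}"
    using finV by (simp add: sum.inter_filter)
  finally show ?thesis by (simp add: sum_other)
qed

lemma trans_snoc:
  assumes "valid (w @ [i0])"
  shows "fcfs_trans V E \<alpha> w (w @ [i0]) = \<alpha> i0"
proof -
  have v: "valid w" "i0 \<in> V" "w \<noteq> [] \<longrightarrow> pt i0 = pt (hd w)" using assms by (auto simp: valid_snoc)
  have "fcfs_trans V E \<alpha> w (w @ [i0]) = (\<Sum>i\<in>V. if i = i0 then \<alpha> i else 0)"
    unfolding fcfs_trans_def
  proof (rule sum.cong[OF refl])
    fix i assume "i \<in> V"
    then show "(if fcfs_step E w i = w @ [i0] then \<alpha> i else 0) = (if i = i0 then \<alpha> i else 0)"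
      using v by (auto simp: step_valid dest: arg_cong[of _ _ length])
  qed
  also have "\<dots> = \<alpha> i0" using v(2) finV by simp
  finally show ?thesis .
qed

end


context cmp begin

lemma stat_invalid:
  assumes "\<not> valid w'"
  shows "((\<lambda>w. \<pi> w * fcfs_trans V E \<alpha> w w') has_sum \<pi> w') UNIV"
proof -
  have "\<pi> w * fcfs_trans V E \<alpha> w w' = 0" for w
  proof (cases "valid w")
    case True
    have "fcfs_step E w i \<noteq> w'" if "i \<in> V" for i
      using valid_step[OF True that] assms by auto
    then show ?thesis using trans0[OF True] by simp
  qed (simp add: \<pi>_def)
  then have "(\<lambda>w. \<pi> w * fcfs_trans V E \<alpha> w w') = (\<lambda>_. 0)" by (rule ext)
  moreover have "\<pi> w' = 0" using assms by (simp add: \<pi>_def)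
  ultimately show ?thesis by simp
qed

lemma stat_nil:
  shows "((\<lambda>w. \<pi> w * fcfs_trans V E \<alpha> w []) has_sum \<pi> []) UNIV"
proof (rule has_sum_finite_neutralI[where B = "(\<lambda>j. [j]) ` V"])
  show "finite ((\<lambda>j. [j]) ` V)" using finV by simp
  show "(\<lambda>j. [j]) ` V \<subseteq> UNIV" by simp
  show "\<pi> w * fcfs_trans V E \<alpha> w [] = 0" if "w \<in> UNIV - (\<lambda>j. [j]) ` V" for w
  proof (cases "valid w")
    case True
    have "fcfs_step E w i \<noteq> []" if "i \<in> V" for i
    proof
      assume a: "fcfs_step E w i = []"
      then have "w \<noteq> []" "tl w = []" using step_valid[OF True that] by (auto split: if_splits)
      then have "w = [hd w]" by (cases w) auto
      moreover have "hd w \<in> V" using valid_mem[OF True hd_in_set[OF \<open>w \<noteq> []\<close>]] by simp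
      ultimately show False using \<open>w \<in> UNIV - (\<lambda>j. [j]) ` V\<close> by (metis DiffD2 image_eqI)
    qed
    then show ?thesis using trans0[OF True] by simp
  qed (simp add: \<pi>_def)
  have "(\<Sum>w\<in>(\<lambda>j. [j]) ` V. \<pi> w * fcfs_trans V E \<alpha> w []) = (\<Sum>j\<in>V. \<pi> [j] * fcfs_trans V E \<alpha> [j] [])"
    by (subst sum.reindex) (auto simp: inj_on_def)
  also have "\<dots> = (\<Sum>j\<in>V. \<alpha> j / Z)"
  proof (rule sum.cong[OF refl])
    fix j assume j: "j \<in> V"
    then have v: "valid [j]" by simp
    have "fcfs_trans V E \<alpha> [j] [] = 1 - m (pt j)" using trans_tl[OF v] by simp
    then show "\<pi> [j] * fcfs_trans V E \<alpha> [j] [] = \<alpha> j / Z"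
      using v r_mul[of j] by (simp add: \<pi>_def)
  qed
  also have "\<dots> = \<pi> []" using atot by (simp add: \<pi>_def flip: sum_divide_distrib)
  finally show "\<pi> [] = (\<Sum>w\<in>(\<lambda>j. [j]) ` V. \<pi> w * fcfs_trans V E \<alpha> w [])" by simp
qed

lemma stat_cons:
  assumes vw: "valid (u @ [i0])"
  shows "((\<lambda>w. \<pi> w * fcfs_trans V E \<alpha> w (u @ [i0])) has_sum \<pi> (u @ [i0])) UNIV"
proof -
  define w' where "w' = u @ [i0]"
  define l where "l = pt i0"
  define B where "B = insert u ((\<lambda>j. j # w') ` Vl l)"
  have vu: "valid u" "i0 \<in> V" using vw by (auto simp: valid_snoc)
  have ptw: "\<forall>x\<in>set w'. pt x = l"
  proof
    fix x assume "x \<in> set w'"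
    then have "pt x = pt (hd w')" using valid_mem[OF vw[folded w'_def]] by simp
    moreover have "pt i0 = pt (hd w')" using valid_mem[OF vw[folded w'_def], of i0] by (simp add: w'_def)
    ultimately show "pt x = l" by (simp add: l_def)
  qed
  have vw': "valid w'" using vw by (simp add: w'_def)
  have vj: "valid (j # w')" if "j \<in> Vl l" for j
    using that valid_subV[OF vw'] ptw by (auto simp: Vl_def)
  show ?thesis unfolding w'_def[symmetric]
  proof (rule has_sum_finite_neutralI[where B = B])
    show "finite B" using finV by (simp add: B_def Vl_def)
    show "B \<subseteq> UNIV" by simp
    show "\<pi> w * fcfs_trans V E \<alpha> w w' = 0" if "w \<in> UNIV - B" for w
    proof (cases "valid w")
      case True
      have "fcfs_step E w i \<noteq> w'" if "i \<in> V" for i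
      proof
        assume a: "fcfs_step E w i = w'"
        show False
        proof (cases "w \<noteq> [] \<and> pt i \<noteq> pt (hd w)")
          case c: True
          then have tw: "tl w = w'" using a step_valid[OF \<open>valid w\<close> \<open>i \<in> V\<close>] by simp
          then have we: "w = hd w # w'" using c by (cases w) auto
          have "hd w \<in> V" using valid_mem[OF True hd_in_set] c by simp
          moreover have "pt (hd w) = pt i0"
          proof -
            have "i0 \<in> set w" using we by (metis list.set_intros(2) w'_def in_set_conv_decomp)
            then show ?thesis using valid_mem[OF True] by simp
          qed
          ultimately have "w \<in> B" using we by (auto simp: B_def Vl_def l_def)
          then show False using \<open>w \<in> UNIV - B\<close> by simp
        next
          case c: False
          have "fcfs_step E w i = w @ [i]"
            unfolding step_valid[OF \<open>valid w\<close> \<open>i \<in> V\<close>] using c by (rule if_not_P)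
          then have "w @ [i] = u @ [i0]" using a by (simp add: w'_def)
          then have "w = u" by simp
          then show False using \<open>w \<in> UNIV - B\<close> by (simp add: B_def)
        qed
      qed
      then show ?thesis using trans0[OF True] by simp
    qed (simp add: \<pi>_def)
    have unot: "u \<notin> (\<lambda>j. j # w') ` Vl l" by (auto simp: w'_def)
    have "(\<Sum>w\<in>B. \<pi> w * fcfs_trans V E \<alpha> w w')
        = \<pi> u * fcfs_trans V E \<alpha> u w' + (\<Sum>w\<in>(\<lambda>j. j # w') ` Vl l. \<pi> w * fcfs_trans V E \<alpha> w w')"
      unfolding B_def using unot finV by (simp add: Vl_def)
    also have "(\<Sum>w\<in>(\<lambda>j. j # w') ` Vl l. \<pi> w * fcfs_trans V E \<alpha> w w')
        = (\<Sum>j\<in>Vl l. \<pi> (j # w') * fcfs_trans V E \<alpha> (j # w') w')"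
      by (subst sum.reindex) (auto simp: inj_on_def)
    also have "\<dots> = (\<Sum>j\<in>Vl l. \<alpha> j * \<pi> w')"
    proof (rule sum.cong[OF refl])
      fix j assume j: "j \<in> Vl l"
      have "fcfs_trans V E \<alpha> (j # w') w' = 1 - m (pt j)" using trans_tl[OF vj[OF j]] by simp
      then show "\<pi> (j # w') * fcfs_trans V E \<alpha> (j # w') w' = \<alpha> j * \<pi> w'"
        using vj[OF j] vw' r_mul[of j] by (simp add: \<pi>_def)
    qed
    also have "\<dots> = m l * \<pi> w'" by (simp add: m_def sum_distrib_right)
    also have "\<pi> u * fcfs_trans V E \<alpha> u w' = (1 - m l) * \<pi> w'"
    proof -
      have "fcfs_trans V E \<alpha> u w' = \<alpha> i0" using trans_snoc[OF vw] by (simp add: w'_def)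
      moreover have "\<alpha> i0 = r i0 * (1 - m l)" using r_mul[of i0] by (simp add: l_def)
      ultimately show ?thesis using vu vw' by (simp add: \<pi>_def w'_def)
    qed
    finally show "\<pi> w' = (\<Sum>w\<in>B. \<pi> w * fcfs_trans V E \<alpha> w w')" by (simp add: algebra_simps)
  qed
qed

lemma stationary_eq: "((\<lambda>w. \<pi> w * fcfs_trans V E \<alpha> w w') has_sum \<pi> w') UNIV"
proof (cases "valid w'")
  case True
  show ?thesis
  proof (cases w' rule: rev_exhaust)
    case Nil
    then show ?thesis using stat_nil by simp
  next
    case (snoc u i0)
    then show ?thesis using stat_cons True by simp
  qed
qed (rule stat_invalid)

end


context cmp begin

definition Mn where "Mn = (\<Sum>l\<in>L. \<rho> l / (1 - \<rho> l)^2) / Z"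

lemma sum_r_Vl: "sum r (Vl l) = \<rho> l"
proof -
  have "sum r (Vl l) = (\<Sum>j\<in>Vl l. \<alpha> j / (1 - m l))"
    by (rule sum.cong) (auto simp: r_def Vl_def)
  also have "\<dots> = \<rho> l" by (simp add: \<rho>_def m_def sum_divide_distrib)
  finally show ?thesis .
qed

lemma finVl: "finite (Vl l)" using finV by (simp add: Vl_def)

lemma hl1: "((\<lambda>w. if set w \<subseteq> Vl l then prod_list (map r w) * 1 else 0) has_sum 1 / (1 - \<rho> l)) UNIV"
proof (rule has_sum_lists[where S="Vl l" and r=r and g="\<lambda>_. 1"])
  show "finite (Vl l)" by (rule finVl)
  show "\<And>x. x \<in> Vl l \<Longrightarrow> 0 \<le> r x" using r_ge0 by (simp add: Vl_def)
  show "sum r (Vl l) < 1" using sum_r_Vl rho_lt1 by simp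
  show "\<And>k. 0 \<le> (1::real)" by simp
  show "((\<lambda>k. 1 * sum r (Vl l) ^ k) has_sum 1 / (1 - \<rho> l)) UNIV"
    using has_sum_geom[OF rho_ge0 rho_lt1, of l] by (simp add: sum_r_Vl)
qed

lemma hl1': "((\<lambda>w. if set w \<subseteq> Vl l then prod_list (map r w) else 0) has_sum 1 / (1 - \<rho> l)) UNIV"
  using hl1[of l] by (simp cong: if_cong)

lemma hl2: "((\<lambda>w. if set w \<subseteq> Vl l then prod_list (map r w) * real (length w) else 0) has_sum \<rho> l / (1 - \<rho> l)^2) UNIV"
proof (rule has_sum_lists[where S="Vl l" and r=r and g="\<lambda>k. real k"])
  show "finite (Vl l)" by (rule finVl)
  show "\<And>x. x \<in> Vl l \<Longrightarrow> 0 \<le> r x" using r_ge0 by (simp add: Vl_def)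
  show "sum r (Vl l) < 1" using sum_r_Vl rho_lt1 by simp
  show "\<And>k. 0 \<le> real k" by simp
  show "((\<lambda>k. real k * sum r (Vl l) ^ k) has_sum \<rho> l / (1 - \<rho> l)^2) UNIV"
    using has_sum_geom_len[OF rho_ge0 rho_lt1, of l] by (simp add: sum_r_Vl)
qed

lemma setVl: "w \<noteq> [] \<Longrightarrow> set w \<subseteq> Vl l \<longleftrightarrow> valid w \<and> pt (hd w) = l"
  by (cases w) (auto simp: Vl_def)

lemma sumL:
  assumes "w \<noteq> []"
  shows "(\<Sum>l\<in>L. if set w \<subseteq> Vl l then f w else 0) = (if valid w then f w else 0)"
proof -
  have "(\<Sum>l\<in>L. if set w \<subseteq> Vl l then f w else 0) = (\<Sum>l\<in>L. if l = pt (hd w) then (if valid w then f w else 0) else 0)"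
    by (rule sum.cong) (auto simp: setVl[OF assms])
  also have "\<dots> = (if valid w then f w else 0)"
    using finV assms valid_mem[of w "hd w"] hd_in_set[OF assms] by (auto simp: L_def)
  finally show ?thesis .
qed

lemma pi_sum: "(\<pi> has_sum 1) UNIV"
proof -
  define ind where "ind w = (if w = [] then 1 else (0::real))" for w :: "nat list"
  have hi: "(ind has_sum 1) UNIV"
    by (rule has_sum_finite_neutralI[where B = "{[]}"]) (auto simp: ind_def)
  have h2: "((\<lambda>w. \<Sum>l\<in>L. (if set w \<subseteq> Vl l then prod_list (map r w) else 0) + - ind w)
      has_sum (\<Sum>l\<in>L. 1 / (1 - \<rho> l) + - 1)) UNIV"
    using finV unfolding L_def
    by (intro has_sum_sum_fin has_sum_add hl1') (auto simp: has_sum_uminus hi)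
  have "((\<lambda>w. ind w + (\<Sum>l\<in>L. (if set w \<subseteq> Vl l then prod_list (map r w) else 0) + - ind w))
      has_sum (1 + (\<Sum>l\<in>L. 1 / (1 - \<rho> l) + - 1))) UNIV"
    by (rule has_sum_add[OF hi h2])
  note h3' = this
  have h3: "((\<lambda>w. ind w + (\<Sum>l\<in>L. (if set w \<subseteq> Vl l then prod_list (map r w) else 0) + - ind w))
      has_sum Z) UNIV"
  proof -
    have "(\<Sum>l\<in>L. 1 / (1 - \<rho> l) + - 1) = (\<Sum>l\<in>L. \<rho> l / (1 - \<rho> l))"
    proof (rule sum.cong[OF refl])
      fix l show "1 / (1 - \<rho> l) + - 1 = \<rho> l / (1 - \<rho> l)"
        using rho_lt1[of l] by (simp add: field_simps)
    qed
    then have Zeq: "1 + (\<Sum>l\<in>L. 1 / (1 - \<rho> l) + - 1) = Z" by (simp add: Z_def)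
    show ?thesis using h3'[unfolded Zeq] .
  qed
  have eq: "ind w + (\<Sum>l\<in>L. (if set w \<subseteq> Vl l then prod_list (map r w) else 0) + - ind w)
      = (if valid w then prod_list (map r w) else 0)" for w
  proof (cases "w = []")
    case True
    then show ?thesis by (simp add: ind_def)
  next
    case False
    then show ?thesis using sumL[OF False, of "\<lambda>w. prod_list (map r w)"] by (simp add: ind_def)
  qed
  have "((\<lambda>w. (1/Z) * (if valid w then prod_list (map r w) else 0)) has_sum (1/Z) * Z) UNIV"
    using has_sum_cmult_right[OF h3[unfolded eq]] .
  moreover have "(\<lambda>w. (1/Z) * (if valid w then prod_list (map r w) else 0)) = \<pi>"
    by (rule ext) (simp add: \<pi>_def)
  ultimately show ?thesis using Z_ge1 by simp
qed

lemma pi_len_sum: "((\<lambda>w. \<pi> w * real (length w)) has_sum Mn) UNIV"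
proof -
  have h: "((\<lambda>w. \<Sum>l\<in>L. if set w \<subseteq> Vl l then prod_list (map r w) * real (length w) else 0)
      has_sum (\<Sum>l\<in>L. \<rho> l / (1 - \<rho> l)^2)) UNIV"
    using finV unfolding L_def by (intro has_sum_sum_fin hl2) auto
  have eq: "(\<Sum>l\<in>L. if set w \<subseteq> Vl l then prod_list (map r w) * real (length w) else 0)
      = (if valid w then prod_list (map r w) * real (length w) else 0)" for w
  proof (cases "w = []")
    case True
    then show ?thesis by simp
  next
    case False
    then show ?thesis using sumL[OF False, of "\<lambda>w. prod_list (map r w) * real (length w)"] by simp
  qed
  have "((\<lambda>w. (1/Z) * (if valid w then prod_list (map r w) * real (length w) else 0)) has_sum (1/Z) * (\<Sum>l\<in>L. \<rho> l / (1 - \<rho> l)^2)) UNIV"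
    using has_sum_cmult_right[OF h[unfolded eq]] .
  moreover have "(\<lambda>w. (1/Z) * (if valid w then prod_list (map r w) * real (length w) else 0)) = (\<lambda>w. \<pi> w * real (length w))"
    by (rule ext) (simp add: \<pi>_def)
  ultimately show ?thesis by (simp add: Mn_def)
qed

lemma pi_nonneg: "\<pi> w \<ge> 0"
proof -
  have "set w \<subseteq> V \<Longrightarrow> prod_list (map r w) \<ge> 0"
    by (induction w) (auto intro!: mult_nonneg_nonneg r_ge0)
  then have "valid w \<Longrightarrow> prod_list (map r w) \<ge> 0" using valid_subV by blast
  then show ?thesis using Z_ge1 by (simp add: \<pi>_def)
qed

lemma mean_eq: "mean_items \<pi> = ennreal Mn"
  unfolding mean_items_def
  by (rule has_sum_ennreal[OF pi_len_sum]) (simp add: pi_nonneg)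

lemma stationary: "fcfs_stationary V E \<alpha> \<pi>"
  unfolding fcfs_stationary_def
  using pi_nonneg pi_sum stationary_eq valid_reach by (auto simp: \<pi>_def)

end


context cmp begin

lemma stable_cmp: "stable V E \<alpha>"
  unfolding stable_def
proof (intro allI impI)
  fix I assume "independent_set V E I"
  then have I: "I \<noteq> {}" "I \<subseteq> V" "\<And>i j. i \<in> I \<Longrightarrow> j \<in> I \<Longrightarrow> \<not> E i j"
    by (auto simp: independent_set_def)
  obtain i where i: "i \<in> I" using I(1) by auto
  define l where "l = pt i"
  have sub: "I \<subseteq> Vl l"
  proof
    fix j assume "j \<in> I"
    then show "j \<in> Vl l" using I(2) I(3)[OF i \<open>j \<in> I\<close>] i by (auto simp: E_def Vl_def l_def)
  qed
  have nb: "nbrs V E I = {j\<in>V. pt j \<noteq> l}"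
  proof
    show "nbrs V E I \<subseteq> {j\<in>V. pt j \<noteq> l}"
      using sub by (auto simp: nbrs_def E_def Vl_def)
    show "{j\<in>V. pt j \<noteq> l} \<subseteq> nbrs V E I"
      using i I(2) by (auto simp: nbrs_def E_def l_def)
  qed
  have "sum \<alpha> I \<le> sum \<alpha> (Vl l)"
    using sub finVl apos by (intro sum_mono2) (auto simp: Vl_def less_imp_le)
  also have "\<dots> < 1 - m l" using m_lt[of l] by (simp add: m_def)
  finally show "sum \<alpha> I < sum \<alpha> (nbrs V E I)" by (simp add: nb sum_other)
qed

lemma connected_cmp:
  assumes "a \<in> V" "b \<in> V" "pt a \<noteq> pt b"
  shows "connected_graph V E"
  unfolding connected_graph_def simple_graph_def
proof (intro conjI allI impI ballI)
  show "finite V" by (rule finV)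
  show "V \<noteq> {}" using assms by auto
  fix x y
  show "E x y \<Longrightarrow> x \<in> V" "E x y \<Longrightarrow> y \<in> V" "E x y \<Longrightarrow> E y x" "\<not> E x x"
    by (auto simp: E_def)
next
  fix x y assume xy: "x \<in> V" "y \<in> V"
  show "E\<^sup>*\<^sup>* x y"
  proof (cases "pt x = pt y")
    case False
    then show ?thesis using xy by (auto simp: E_def)
  next
    case True
    obtain z where z: "z \<in> V" "pt z \<noteq> pt x" using assms by metis
    have "E x z" "E z y" using z xy True by (auto simp: E_def)
    then show ?thesis by (meson rtranclp.rtrancl_into_rtrancl rtranclp.rtrancl_refl)
  qed
qed

end


definition ptG :: "nat \<Rightarrow> nat" where "ptG i = (if i \<le> 1 then 0 else if i = 2 then 1 else 2)"
definition ptH :: "nat \<Rightarrow> nat" where "ptH i = (if i = 0 then 3 else ptG i)"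
definition \<alpha>n :: "nat \<Rightarrow> nat \<Rightarrow> real" where
  "\<alpha>n n i = (if i \<le> 1 then 1/10 else if i = 2 then 2/5 else 2/5 / real (n - 3))"

lemma mul_div_self: "(x::real) \<noteq> 0 \<Longrightarrow> x * (c / x) = c" by simp

context fixes n :: nat assumes n4: "n \<ge> 4"
begin

lemma sum_tail: "sum (\<alpha>n n) {3..<n} = 2/5"
proof -
  have "sum (\<alpha>n n) {3..<n} = (\<Sum>i\<in>{3..<n}. 2/5 / real (n - 3))"
    by (rule sum.cong) (auto simp: \<alpha>n_def)
  also have "\<dots> = real (n - 3) * (2/5 / real (n - 3))" by (simp only: sum_constant card_atLeastLessThan)
  also have "\<dots> = 2/5"
  proof -
    have p: "real (n - 3) \<noteq> 0" using n4 by simp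
    show ?thesis by (rule mul_div_self[OF p])
  qed
  finally show ?thesis .
qed

lemma V_split: "{..<n} = {0,1,2} \<union> {3..<n}" using n4 by auto

lemma tot: "sum (\<alpha>n n) {..<n} = 1"
proof -
  have "sum (\<alpha>n n) {..<n} = sum (\<alpha>n n) {0,1,2} + sum (\<alpha>n n) {3..<n}"
    unfolding V_split by (rule sum.union_disjoint) auto
  also have "sum (\<alpha>n n) {0,1,2} = 3/5" by (simp add: \<alpha>n_def)
  finally show ?thesis by (simp add: sum_tail)
qed

lemma partG0: "{j\<in>{..<n}. ptG j = 0} = {0,1}" using n4 by (auto simp: ptG_def)
lemma partG1: "{j\<in>{..<n}. ptG j = 1} = {2}" using n4 by (auto simp: ptG_def)
lemma partG2: "{j\<in>{..<n}. ptG j = 2} = {3..<n}" using n4 by (auto simp: ptG_def)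
lemma partH3: "{j\<in>{..<n}. ptH j = 3} = {0}" using n4 by (auto simp: ptH_def ptG_def)
lemma partH0: "{j\<in>{..<n}. ptH j = 0} = {1}" using n4 by (auto simp: ptH_def ptG_def)
lemma partH1: "{j\<in>{..<n}. ptH j = 1} = {2}" using n4 by (auto simp: ptH_def ptG_def)
lemma partH2: "{j\<in>{..<n}. ptH j = 2} = {3..<n}" using n4 by (auto simp: ptH_def ptG_def)

lemma sG0: "sum (\<alpha>n n) {j\<in>{..<n}. ptG j = 0} < 1/2" unfolding partG0 by (simp add: \<alpha>n_def)
lemma sG1: "sum (\<alpha>n n) {j\<in>{..<n}. ptG j = 1} < 1/2" unfolding partG1 by (simp add: \<alpha>n_def)
lemma sG2: "sum (\<alpha>n n) {j\<in>{..<n}. ptG j = 2} < 1/2" unfolding partG2 by (simp add: sum_tail)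
lemma sH3: "sum (\<alpha>n n) {j\<in>{..<n}. ptH j = 3} < 1/2" unfolding partH3 by (simp add: \<alpha>n_def)
lemma sH0: "sum (\<alpha>n n) {j\<in>{..<n}. ptH j = 0} < 1/2" unfolding partH0 by (simp add: \<alpha>n_def)
lemma sH1: "sum (\<alpha>n n) {j\<in>{..<n}. ptH j = 1} < 1/2" unfolding partH1 by (simp add: \<alpha>n_def)
lemma sH2: "sum (\<alpha>n n) {j\<in>{..<n}. ptH j = 2} < 1/2" unfolding partH2 by (simp add: sum_tail)

lemma apos: "i \<in> {..<n} \<Longrightarrow> \<alpha>n n i > 0" using n4 by (simp add: \<alpha>n_def)

lemma cmpG: "cmp {..<n} ptG (\<alpha>n n)"
proof
  show "finite {..<n}" by simp
  show "\<And>i. i \<in> {..<n} \<Longrightarrow> 0 < \<alpha>n n i" by (rule apos)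
  show "sum (\<alpha>n n) {..<n} = 1" by (rule tot)
  fix i assume "i \<in> {..<n}"
  have "ptG i = 0 \<or> ptG i = 1 \<or> ptG i = 2" by (simp add: ptG_def)
  then show "sum (\<alpha>n n) {j\<in>{..<n}. ptG j = ptG i} < 1/2"
    using sG0 sG1 sG2 by (elim disjE) simp_all
qed

lemma cmpH: "cmp {..<n} ptH (\<alpha>n n)"
proof
  show "finite {..<n}" by simp
  show "\<And>i. i \<in> {..<n} \<Longrightarrow> 0 < \<alpha>n n i" by (rule apos)
  show "sum (\<alpha>n n) {..<n} = 1" by (rule tot)
  fix i assume "i \<in> {..<n}"
  have "ptH i = 3 \<or> ptH i = 0 \<or> ptH i = 1 \<or> ptH i = 2" by (simp add: ptH_def ptG_def)
  then show "sum (\<alpha>n n) {j\<in>{..<n}. ptH j = ptH i} < 1/2"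
    using sH3 sH0 sH1 sH2 by (elim disjE) simp_all
qed

interpretation G: cmp "{..<n}" ptG "\<alpha>n n" by (rule cmpG)
interpretation H: cmp "{..<n}" ptH "\<alpha>n n" by (rule cmpH)

lemma LG: "G.L = {0,1,2}"
  unfolding G.L_def
proof
  show "ptG ` {..<n} \<subseteq> {0,1,2}" by (auto simp: ptG_def)
  have "ptG 0 = 0" "ptG 2 = 1" "ptG 3 = 2" by (simp_all add: ptG_def)
  moreover have "(0::nat) \<in> {..<n}" "(2::nat) \<in> {..<n}" "(3::nat) \<in> {..<n}" using n4 by auto
  ultimately show "{0,1,2} \<subseteq> ptG ` {..<n}" by (metis empty_subsetI insert_subset rev_image_eqI)
qed
lemma LH: "H.L = {3,0,1,2}"
  unfolding H.L_def
proof
  show "ptH ` {..<n} \<subseteq> {3,0,1,2}" by (auto simp: ptH_def ptG_def)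
  have "ptH 0 = 3" "ptH 1 = 0" "ptH 2 = 1" "ptH 3 = 2" by (simp_all add: ptH_def ptG_def)
  moreover have "(0::nat) \<in> {..<n}" "(1::nat) \<in> {..<n}" "(2::nat) \<in> {..<n}" "(3::nat) \<in> {..<n}" using n4 by auto
  ultimately show "{3,0,1,2} \<subseteq> ptH ` {..<n}" by (metis empty_subsetI insert_subset rev_image_eqI)
qed

lemma mG0: "G.m 0 = 1/5" unfolding G.m_def G.Vl_def partG0 by (simp add: \<alpha>n_def)
lemma mG1: "G.m 1 = 2/5" unfolding G.m_def G.Vl_def partG1 by (simp add: \<alpha>n_def)
lemma mG2: "G.m 2 = 2/5" unfolding G.m_def G.Vl_def partG2 by (rule sum_tail)
lemma mH3: "H.m 3 = 1/10" unfolding H.m_def H.Vl_def partH3 by (simp add: \<alpha>n_def)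
lemma mH0: "H.m 0 = 1/10" unfolding H.m_def H.Vl_def partH0 by (simp add: \<alpha>n_def)
lemma mH1: "H.m 1 = 2/5" unfolding H.m_def H.Vl_def partH1 by (simp add: \<alpha>n_def)
lemma mH2: "H.m 2 = 2/5" unfolding H.m_def H.Vl_def partH2 by (rule sum_tail)

lemma MnG: "G.Mn = 7/3"
  unfolding G.Mn_def G.Z_def LG G.\<rho>_def
  by (simp add: mG0 mG1 mG2 mG1[unfolded One_nat_def] power2_eq_square)

lemma MnH: "H.Mn = 131/56"
  unfolding H.Mn_def H.Z_def LH H.\<rho>_def
  by (simp add: mH3 mH0 mH1 mH2 mH1[unfolded One_nat_def] power2_eq_square)

lemma edgeH: "add_edge G.E 0 1 = H.E"
  using n4 by (auto simp: add_edge_def G.E_def H.E_def ptH_def ptG_def fun_eq_iff)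

lemma main_n:
  "\<exists>(E :: nat \<Rightarrow> nat \<Rightarrow> bool) (i\<^sub>0 :: nat) (j\<^sub>0 :: nat) (\<alpha> :: nat \<Rightarrow> real).
           connected_graph {..<n} E \<and>
           i\<^sub>0 \<in> {..<n} \<and> j\<^sub>0 \<in> {..<n} \<and> i\<^sub>0 \<noteq> j\<^sub>0 \<and> \<not> E i\<^sub>0 j\<^sub>0 \<and>
           arrival_dist {..<n} \<alpha> \<and> stable {..<n} E \<alpha> \<and>
           (\<exists>\<pi> \<pi>'. fcfs_stationary {..<n} E \<alpha> \<pi> \<and>
                    fcfs_stationary {..<n} (add_edge E i\<^sub>0 j\<^sub>0) \<alpha> \<pi>' \<and>
                    mean_items \<pi>' > mean_items \<pi>)"
proof (intro exI conjI)
  show "connected_graph {..<n} G.E"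
    using n4 by (intro G.connected_cmp[of 0 2]) (auto simp: ptG_def)
  show "(0::nat) \<in> {..<n}" "(1::nat) \<in> {..<n}" "(0::nat) \<noteq> 1" using n4 by auto
  show "\<not> G.E 0 1" by (simp add: G.E_def ptG_def)
  show "arrival_dist {..<n} (\<alpha>n n)" using apos tot by (simp add: arrival_dist_def)
  show "stable {..<n} G.E (\<alpha>n n)" by (rule G.stable_cmp)
  show "fcfs_stationary {..<n} G.E (\<alpha>n n) G.\<pi>" by (rule G.stationary)
  show "fcfs_stationary {..<n} (add_edge G.E 0 1) (\<alpha>n n) H.\<pi>"
    unfolding edgeH by (rule H.stationary)
  show "mean_items G.\<pi> < mean_items H.\<pi>"
    by (simp add: G.mean_eq H.mean_eq MnG MnH ennreal_less_iff)
qed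

end

theorem mainTheorem10:
  fixes n :: nat
  assumes "n \<ge> 4"
  shows "\<exists>(E :: nat \<Rightarrow> nat \<Rightarrow> bool) (i\<^sub>0 :: nat) (j\<^sub>0 :: nat) (\<alpha> :: nat \<Rightarrow> real).
           connected_graph {..<n} E \<and>
           i\<^sub>0 \<in> {..<n} \<and> j\<^sub>0 \<in> {..<n} \<and> i\<^sub>0 \<noteq> j\<^sub>0 \<and> \<not> E i\<^sub>0 j\<^sub>0 \<and>
           arrival_dist {..<n} \<alpha> \<and> stable {..<n} E \<alpha> \<and>
           (\<exists>\<pi> \<pi>'. fcfs_stationary {..<n} E \<alpha> \<pi> \<and>
                    fcfs_stationary {..<n} (add_edge E i\<^sub>0 j\<^sub>0) \<alpha> \<pi>' \<and>
                    mean_items \<pi>' > mean_items \<pi>)"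
  by (rule main_n[OF assms])


end
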